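(* If $G$ is a graph of order $n$, then $\operatorname{lb}_1(G)\leq\frac{n-1}{2}$, with equality if and only if $G$ is a conference graph.
   Context: All graphs are finite and simple. For a graph $G$ and a partition $\mathcal{P}$ of $V(G)$, the quotient trigraph $G/\mathcal{P}$ has vertex set $\mathcal{P}$; two distinct parts $U,W$ are joined by a black edge if every pair $\{u,w\}$ with $u\in U,w\in W$ is an edge of $G$, are non-adjacent if no such pair is an edge, and are joined by a red edge otherwise; the red degree of a part is the number of red edges incident to it. For $|V(G)|\geq 2$, $\operatorname{lb}_1(G)$ is the minimum, over all 2-element subsets $\{u,v\}\subseteq V(G)$, of the maximum red degree of $G/\mathcal{P}$, where $\mathcal{P}$ is the partition whose only non-singleton part is $\{u,v\}$; for $|V(G)|=1$, $\operatorname{lb}_1(G)\coloneqq 0$. A graph $G$ of order $n$ is strongly regular with parameters $(n,d,\lambda,\mu)$ if it is $d$-regular and any two distinct adjacent vertices have exactly $\lambda$ common neighbors while any two distinct non-adjacent vertices have exactly $\mu$ common neighbors. A conference graph is a strongly regular graph with parameters $(n,\frac{n-1}{2},\frac{n-5}{4},\frac{n-1}{4})$. *)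

theory Defs
  imports Complex_Main
begin

definition simple_graph :: "'a set \<Rightarrow> ('a \<Rightarrow> 'a \<Rightarrow> bool) \<Rightarrow> bool" where
  "simple_graph V E \<longleftrightarrow> finite V \<and> (\<forall>x y. E x y \<longrightarrow> x \<in> V \<and> y \<in> V)
     \<and> (\<forall>x y. E x y \<longrightarrow> E y x) \<and> (\<forall>x. \<not> E x x)"

definition nbhd :: "'a set \<Rightarrow> ('a \<Rightarrow> 'a \<Rightarrow> bool) \<Rightarrow> 'a \<Rightarrow> 'a set" where
  "nbhd V E v = {w \<in> V. E v w}"

text \<open>Red edge in the quotient trigraph between two distinct parts U, W:
  neither all pairs are edges (black) nor no pair is an edge (non-adjacent).\<close>
definition red_edge :: "('a \<Rightarrow> 'a \<Rightarrow> bool) \<Rightarrow> 'a set \<Rightarrow> 'a set \<Rightarrow> bool" where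
  "red_edge E U W \<longleftrightarrow> U \<noteq> W \<and> \<not> (\<forall>u\<in>U. \<forall>w\<in>W. E u w) \<and> \<not> (\<forall>u\<in>U. \<forall>w\<in>W. \<not> E u w)"

definition red_degree :: "('a \<Rightarrow> 'a \<Rightarrow> bool) \<Rightarrow> 'a set set \<Rightarrow> 'a set \<Rightarrow> nat" where
  "red_degree E P U = card {W \<in> P. red_edge E U W}"

definition max_red_degree :: "('a \<Rightarrow> 'a \<Rightarrow> bool) \<Rightarrow> 'a set set \<Rightarrow> nat" where
  "max_red_degree E P = Max (red_degree E P ` P)"

definition pair_partition :: "'a set \<Rightarrow> 'a \<Rightarrow> 'a \<Rightarrow> 'a set set" where
  "pair_partition V u v = insert {u, v} ((\<lambda>w. {w}) ` (V - {u, v}))"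

definition lb1 :: "'a set \<Rightarrow> ('a \<Rightarrow> 'a \<Rightarrow> bool) \<Rightarrow> nat" where
  "lb1 V E = (if card V = 1 then 0 else
     Min {max_red_degree E (pair_partition V u v) | u v. u \<in> V \<and> v \<in> V \<and> u \<noteq> v})"

text \<open>Strongly regular with parameters (n,d,lambda,mu); parameters are taken as reals so that
  conference-graph parameters like (n-5)/4 make sense for every n.\<close>
definition strongly_regular ::
  "'a set \<Rightarrow> ('a \<Rightarrow> 'a \<Rightarrow> bool) \<Rightarrow> real \<Rightarrow> real \<Rightarrow> real \<Rightarrow> real \<Rightarrow> bool" where
  "strongly_regular V E n d lam mu \<longleftrightarrow>
     real (card V) = n \<and>
     (\<forall>v\<in>V. real (card (nbhd V E v)) = d) \<and>
     (\<forall>u\<in>V. \<forall>v\<in>V. u \<noteq> v \<and> E u v \<longrightarrow> real (card (nbhd V E u \<inter> nbhd V E v)) = lam) \<and>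
     (\<forall>u\<in>V. \<forall>v\<in>V. u \<noteq> v \<and> \<not> E u v \<longrightarrow> real (card (nbhd V E u \<inter> nbhd V E v)) = mu)"

definition conference_graph :: "'a set \<Rightarrow> ('a \<Rightarrow> 'a \<Rightarrow> bool) \<Rightarrow> bool" where
  "conference_graph V E \<longleftrightarrow>
     (let n = real (card V) in strongly_regular V E n ((n - 1) / 2) ((n - 5) / 4) ((n - 1) / 4))"

end

theory Submission
  imports Defs
begin

lemma ind_card: "finite V \<Longrightarrow> S \<subseteq> V \<Longrightarrow> (\<Sum>x\<in>V. if x \<in> S then 1 else 0) = (card S::nat)"
proof -
  assume a: "finite V" "S \<subseteq> V"
  have "{x \<in> V. x \<in> S} = S" using a by auto
  then show ?thesis using a by (simp add: sum.If_cases Int_def)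
qed

lemma card_filter_sum: "finite S \<Longrightarrow> card {w\<in>S. P w} = (\<Sum>w\<in>S. if P w then 1 else (0::nat))"
  by (simp add: sum.If_cases Int_def)

definition Dv :: "'a set \<Rightarrow> ('a \<Rightarrow> 'a \<Rightarrow> bool) \<Rightarrow> 'a \<Rightarrow> 'a \<Rightarrow> nat" where
  "Dv V E u v = card {w \<in> V - {u,v}. E u w \<noteq> E v w}"

lemma sgD:
  assumes "simple_graph V E"
  shows "finite V" "\<And>x y. E x y \<Longrightarrow> x \<in> V" "\<And>x y. E x y \<Longrightarrow> y \<in> V"
    "\<And>x y. E x y \<Longrightarrow> E y x" "\<And>x. \<not> E x x"
  using assms unfolding simple_graph_def by blast+

lemma mrd:
  assumes sg: "simple_graph V E" and uv: "u \<in> V" "v \<in> V" "u \<noteq> v"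
  shows "max_red_degree E (pair_partition V u v) = Dv V E u v"
proof -
  note s = sgD[OF sg]
  let ?P = "pair_partition V u v"
  let ?X = "{w \<in> V - {u,v}. E u w \<noteq> E v w}"
  have finP: "finite ?P" using s(1) unfolding pair_partition_def by simp
  have re1: "{W \<in> ?P. red_edge E {u,v} W} = (\<lambda>w. {w}) ` ?X"
  proof
    show "{W \<in> ?P. red_edge E {u,v} W} \<subseteq> (\<lambda>w. {w}) ` ?X"
    proof
      fix W assume "W \<in> {W \<in> ?P. red_edge E {u,v} W}"
      then have W: "W \<in> ?P" "red_edge E {u,v} W" by auto
      then have "W \<noteq> {u,v}" unfolding red_edge_def by auto
      then obtain w where w: "w \<in> V - {u,v}" "W = {w}" using W(1) unfolding pair_partition_def by auto
      then have "E u w \<noteq> E v w" using W(2) unfolding red_edge_def by auto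
      then show "W \<in> (\<lambda>w. {w}) ` ?X" using w by auto
    qed
  next
    show "(\<lambda>w. {w}) ` ?X \<subseteq> {W \<in> ?P. red_edge E {u,v} W}"
    proof
      fix W assume "W \<in> (\<lambda>w. {w}) ` ?X"
      then obtain w where w: "w \<in> V - {u,v}" "E u w \<noteq> E v w" "W = {w}" by auto
      have "{u,v} \<noteq> {w}" using uv(3) by (metis insertI1 insert_commute singletonD)
      then have "red_edge E {u,v} W" using w unfolding red_edge_def by auto
      moreover have "W \<in> ?P" using w unfolding pair_partition_def by auto
      ultimately show "W \<in> {W \<in> ?P. red_edge E {u,v} W}" by auto
    qed
  qed
  have rd1: "red_degree E ?P {u,v} = Dv V E u v"
    unfolding red_degree_def Dv_def re1 by (rule card_image) (simp add: inj_on_def)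
  have rd2: "red_degree E ?P W \<le> Dv V E u v" if W: "W \<in> ?P" for W
  proof (cases "W = {u,v}")
    case True then show ?thesis using rd1 by simp
  next
    case False
    then obtain w where w: "w \<in> V - {u,v}" "W = {w}" using W unfolding pair_partition_def by auto
    have sub: "{W' \<in> ?P. red_edge E W W'} \<subseteq> {{u,v}}"
    proof
      fix W' assume a: "W' \<in> {W' \<in> ?P. red_edge E W W'}"
      show "W' \<in> {{u,v}}"
      proof (rule ccontr)
        assume "W' \<notin> {{u,v}}"
        then obtain x where "W' = {x}" using a unfolding pair_partition_def by auto
        then show False using a w unfolding red_edge_def by auto
      qed
    qed
    show ?thesis
    proof (cases "red_edge E W {u,v}")
      case True
      then have "E u w \<noteq> E v w" using w s(4) unfolding red_edge_def by blast
      then have "w \<in> {w \<in> V - {u,v}. E u w \<noteq> E v w}" using w by auto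
      then have "1 \<le> Dv V E u v" unfolding Dv_def using s(1)
        by (metis (no_types, lifting) card_0_eq emptyE finite_Diff finite_subset less_one linorder_not_le mem_Collect_eq subsetI)
      moreover have "red_degree E ?P W \<le> 1" unfolding red_degree_def
        using card_mono[OF _ sub] by simp
      ultimately show ?thesis by linarith
    next
      case False
      then have "{W' \<in> ?P. red_edge E W W'} = {}" using sub by auto
      then have "red_degree E ?P W = 0" unfolding red_degree_def by (metis card.empty)
      then show ?thesis by simp
    qed
  qed
  have "{u,v} \<in> ?P" unfolding pair_partition_def by simp
  then have mem: "Dv V E u v \<in> red_degree E ?P ` ?P" using rd1 by (metis image_eqI)
  show ?thesis unfolding max_red_degree_def
    using rd2 finP mem by (intro Max_eqI) auto
qed

lemma count_w:
  assumes sg: "simple_graph V E" and w: "w \<in> V"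
  shows "(\<Sum>u\<in>V. \<Sum>v\<in>V. if u \<noteq> v \<and> w \<noteq> u \<and> w \<noteq> v \<and> E u w \<noteq> E v w then 1 else (0::nat))
     = 2 * card (nbhd V E w) * (card V - 1 - card (nbhd V E w))"
proof -
  note s = sgD[OF sg]
  define N where "N = nbhd V E w"
  define M where "M = V - {w} - N"
  have NV: "N \<subseteq> V - {w}" unfolding N_def nbhd_def using s by auto
  have MV: "M \<subseteq> V" unfolding M_def by auto
  have NV': "N \<subseteq> V" using NV by auto
  have cM: "card M = card V - 1 - card N"
  proof -
    have "card M = card (V - {w}) - card N" unfolding M_def
      using NV s(1) by (intro card_Diff_subset) (auto intro: finite_subset)
    then show ?thesis using w s(1) by simp
  qed
  have eq: "(if u \<noteq> v \<and> w \<noteq> u \<and> w \<noteq> v \<and> E u w \<noteq> E v w then 1 else (0::nat))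
      = (if u \<in> N then 1 else 0) * (if v \<in> M then 1 else 0) + (if u \<in> M then 1 else 0) * (if v \<in> N then 1 else 0)"
    if "u \<in> V" "v \<in> V" for u v
    using that s(4,5) unfolding N_def M_def nbhd_def by auto
  have "(\<Sum>u\<in>V. \<Sum>v\<in>V. if u \<noteq> v \<and> w \<noteq> u \<and> w \<noteq> v \<and> E u w \<noteq> E v w then 1 else (0::nat))
     = (\<Sum>u\<in>V. \<Sum>v\<in>V. (if u \<in> N then 1 else 0) * (if v \<in> M then 1 else 0) + (if u \<in> M then 1 else 0) * (if v \<in> N then 1 else 0))"
    using eq by (intro sum.cong refl) auto
  also have "\<dots> = (\<Sum>u\<in>V. (if u \<in> N then 1 else 0) * card M + (if u \<in> M then 1 else 0) * card N)"
    by (simp add: sum.distrib sum_distrib_left[symmetric] ind_card[OF s(1) MV] ind_card[OF s(1) NV'])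
  also have "\<dots> = card N * card M + card M * card N"
    using NV MV s(1)
    by (simp add: sum.distrib sum_distrib_right[symmetric] ind_card[OF s(1) MV] ind_card[OF s(1) NV'])
  finally show ?thesis unfolding cM N_def by simp
qed

lemma double_count:
  assumes sg: "simple_graph V E"
  shows "(\<Sum>u\<in>V. \<Sum>v\<in>V. if u \<noteq> v then Dv V E u v else 0)
     = (\<Sum>w\<in>V. 2 * card (nbhd V E w) * (card V - 1 - card (nbhd V E w)))"
proof -
  note s = sgD[OF sg]
  let ?I = "\<lambda>u v w. if u \<noteq> v \<and> w \<noteq> u \<and> w \<noteq> v \<and> E u w \<noteq> E v w then 1 else (0::nat)"
  have "(if u \<noteq> v then Dv V E u v else 0) = (\<Sum>w\<in>V. ?I u v w)" for u v
  proof -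
    have "{w \<in> V - {u,v}. E u w \<noteq> E v w} = {w \<in> V. w \<notin> {u,v} \<and> E u w \<noteq> E v w}" by auto
    then have "Dv V E u v = (\<Sum>w\<in>V. if w \<notin> {u,v} \<and> E u w \<noteq> E v w then 1 else 0)"
      unfolding Dv_def using s(1) by (simp add: card_filter_sum)
    then show ?thesis by (auto intro: sum.cong)
  qed
  then have "(\<Sum>u\<in>V. \<Sum>v\<in>V. if u \<noteq> v then Dv V E u v else 0) = (\<Sum>u\<in>V. \<Sum>v\<in>V. \<Sum>w\<in>V. ?I u v w)"
    by simp
  also have "\<dots> = (\<Sum>u\<in>V. \<Sum>w\<in>V. \<Sum>v\<in>V. ?I u v w)"
  proof -
    have "(\<Sum>v\<in>V. \<Sum>w\<in>V. ?I u v w) = (\<Sum>w\<in>V. \<Sum>v\<in>V. ?I u v w)" for u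
      by (rule sum.swap)
    then show ?thesis by simp
  qed
  also have "\<dots> = (\<Sum>w\<in>V. \<Sum>u\<in>V. \<Sum>v\<in>V. ?I u v w)"
    by (rule sum.swap[of "\<lambda>u w. \<Sum>v\<in>V. ?I u v w"])
  also have "\<dots> = (\<Sum>w\<in>V. 2 * card (nbhd V E w) * (card V - 1 - card (nbhd V E w)))"
    using count_w[OF sg] by (intro sum.cong refl) auto
  finally show ?thesis .
qed

lemma ident:
  assumes sg: "simple_graph V E" and uv: "u \<in> V" "v \<in> V" "u \<noteq> v"
  shows "Dv V E u v + 2 * card (nbhd V E u \<inter> nbhd V E v) + (if E u v then 2 else 0)
       = card (nbhd V E u) + card (nbhd V E v)"
proof -
  note s = sgD[OF sg]
  let ?i = "\<lambda>P. if P then 1 else (0::nat)"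
  have pw: "?i (E u w) + ?i (E v w) = ?i (w \<notin> {u,v} \<and> E u w \<noteq> E v w) + 2 * ?i (E u w \<and> E v w)
      + ?i (w = u \<and> E u v) + ?i (w = v \<and> E u v)" for w
    using s(4,5) uv(3) by auto
  have c1: "card (nbhd V E x) = (\<Sum>w\<in>V. ?i (E x w))" for x
    unfolding nbhd_def using s(1) by (simp add: card_filter_sum)
  have c2: "card (nbhd V E u \<inter> nbhd V E v) = (\<Sum>w\<in>V. ?i (E u w \<and> E v w))"
  proof -
    have "nbhd V E u \<inter> nbhd V E v = {w \<in> V. E u w \<and> E v w}" unfolding nbhd_def by auto
    then show ?thesis using s(1) by (simp add: card_filter_sum)
  qed
  have c3: "Dv V E u v = (\<Sum>w\<in>V. ?i (w \<notin> {u,v} \<and> E u w \<noteq> E v w))"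
  proof -
    have "{w \<in> V - {u,v}. E u w \<noteq> E v w} = {w \<in> V. w \<notin> {u,v} \<and> E u w \<noteq> E v w}" by auto
    then show ?thesis unfolding Dv_def using s(1) by (simp add: card_filter_sum)
  qed
  have c4: "(\<Sum>w\<in>V. ?i (w = x \<and> E u v)) = ?i (E u v)" if "x \<in> V" for x
  proof -
    have "(\<Sum>w\<in>V. ?i (w = x \<and> E u v)) = (\<Sum>w\<in>V. if w = x then ?i (E u v) else 0)"
      by (intro sum.cong) auto
    also have "\<dots> = ?i (E u v)" using that s(1) by (simp add: sum.delta)
    finally show ?thesis .
  qed
  have "card (nbhd V E u) + card (nbhd V E v) = (\<Sum>w\<in>V. ?i (E u w) + ?i (E v w))"
    unfolding c1 by (simp add: sum.distrib)
  also have "\<dots> = (\<Sum>w\<in>V. ?i (w \<notin> {u,v} \<and> E u w \<noteq> E v w) + 2 * ?i (E u w \<and> E v w)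
      + ?i (w = u \<and> E u v) + ?i (w = v \<and> E u v))"
    using pw by (intro sum.cong refl) 
  also have "\<dots> = Dv V E u v + 2 * card (nbhd V E u \<inter> nbhd V E v) + ?i (E u v) + ?i (E u v)"
    unfolding c2 c3 by (simp add: sum.distrib sum_distrib_left c4 uv)
  finally show ?thesis by auto
qed

lemma ident_real:
  assumes "simple_graph V E" "u \<in> V" "v \<in> V" "u \<noteq> v"
  shows "real (Dv V E u v) + 2 * real (card (nbhd V E u \<inter> nbhd V E v)) + (if E u v then 2 else 0)
       = real (card (nbhd V E u)) + real (card (nbhd V E v))"
proof -
  have "real (Dv V E u v + 2 * card (nbhd V E u \<inter> nbhd V E v) + (if E u v then 2 else 0))
      = real (card (nbhd V E u) + card (nbhd V E v))"
    by (rule arg_cong[where f=real]) (rule ident[OF assms])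
  then show ?thesis by (cases "E u v") simp_all
qed

lemma sum_ne_const:
  assumes "finite V" "u \<in> V"
  shows "(\<Sum>v\<in>V. if u \<noteq> v then c else 0) = (c::real) * (real (card V) - 1)"
proof -
  have "(\<Sum>v\<in>V. if u \<noteq> v then c else 0) = (if u \<noteq> u then c else 0) + (\<Sum>v\<in>V - {u}. if u \<noteq> v then c else 0)"
    using sum.remove[OF assms] by blast
  also have "\<dots> = (\<Sum>v\<in>V - {u}. if u \<noteq> v then c else 0)" by simp
  also have "\<dots> = (\<Sum>v\<in>V - {u}. c)" by (rule sum.cong) auto
  also have "\<dots> = c * real (card (V - {u}))" by simp
  also have "\<dots> = c * (real (card V) - 1)"
  proof -
    have k: "card V \<ge> 1" using assms by (metis Suc_leI card_gt_0_iff empty_iff One_nat_def)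
    have "card (V - {u}) = card V - 1" using assms by (simp add: card_Diff_singleton)
    then have "real (card (V - {u})) = real (card V) - 1" using k by (simp add: of_nat_diff)
    then show ?thesis by simp
  qed
  finally show ?thesis .
qed

theorem mainTheorem5:
  fixes V :: "'a set" and E :: "'a \<Rightarrow> 'a \<Rightarrow> bool" and n :: nat
  assumes "simple_graph V E" and "V \<noteq> {}" and "card V = n"
  shows "real (lb1 V E) \<le> (real n - 1) / 2 \<and>
         (real (lb1 V E) = (real n - 1) / 2 \<longleftrightarrow> conference_graph V E)"
proof -
  note s = sgD[OF assms(1)]
  have n1: "n \<ge> 1" using assms(2,3) s(1) by (metis One_nat_def Suc_leI card_gt_0_iff)
  show ?thesis
  proof (cases "n = 1")
    case True
    then obtain x where V: "V = {x}" using assms(3) card_1_singletonE by metis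
    have lb: "lb1 V E = 0" unfolding lb1_def using assms(3) True by simp
    have nb: "nbhd {x} E x = {}" unfolding nbhd_def using s(5) by auto
    have "conference_graph V E" unfolding conference_graph_def strongly_regular_def Let_def V
      using nb by simp
    then show ?thesis using lb True by simp
  next
    case False
    then have n2: "n \<ge> 2" using n1 by simp
    define S where "S = {max_red_degree E (pair_partition V u v) | u v. u \<in> V \<and> v \<in> V \<and> u \<noteq> v}"
    have lbS: "lb1 V E = Min S" unfolding lb1_def S_def using False assms(3) by simp
    have S_eq: "S = {Dv V E u v | u v. u \<in> V \<and> v \<in> V \<and> u \<noteq> v}"
      unfolding S_def using mrd[OF assms(1)] by metis
    have "S \<subseteq> (\<lambda>(u,v). Dv V E u v) ` (V \<times> V)" unfolding S_eq by auto
    then have finS: "finite S" using s(1) by (meson finite_SigmaI finite_imageI finite_subset)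
    obtain a where a: "a \<in> V" using assms(2) by blast
    have "card (V - {a}) \<ge> 1" using a n2 assms(3) s(1) by (simp add: card_Diff_singleton)
    then obtain b where b: "b \<in> V - {a}" by (metis card.empty empty_iff not_one_le_zero subsetI subset_empty)
    have Sne: "S \<noteq> {}" unfolding S_eq using a b by blast
    define m where "m = Min S"
    have mS: "m \<in> S" unfolding m_def using finS Sne by simp
    have mle: "m \<le> Dv V E u v" if "u \<in> V" "v \<in> V" "u \<noteq> v" for u v
      unfolding m_def using finS that S_eq by (intro Min_le) auto
    define d where "d w = card (nbhd V E w)" for w
    have dle: "d w \<le> n - 1" if "w \<in> V" for w
    proof -
      have "nbhd V E w \<subseteq> V - {w}" unfolding nbhd_def using s(5) by auto
      then have "d w \<le> card (V - {w})" unfolding d_def using s(1) by (simp add: card_mono)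
      then show ?thesis using that assms(3) s(1) by (simp add: card_Diff_singleton)
    qed
    define L where "L = (\<Sum>u\<in>V. \<Sum>v\<in>V. if u \<noteq> v then real (Dv V E u v) else 0)"
    define R where "R = (\<Sum>w\<in>V. 2 * real (d w) * (real n - 1 - real (d w)))"
    have DC: "L = R"
    proof -
      have "real (\<Sum>u\<in>V. \<Sum>v\<in>V. if u \<noteq> v then Dv V E u v else 0) = L"
        unfolding L_def of_nat_sum by (intro sum.cong refl) simp
      moreover have "real (\<Sum>w\<in>V. 2 * card (nbhd V E w) * (card V - 1 - card (nbhd V E w))) = R"
        unfolding R_def of_nat_sum
      proof (intro sum.cong refl)
        fix w assume w: "w \<in> V"
        have "d w \<le> card V - 1" using dle[OF w] assms(3) by simp
        then show "real (2 * card (nbhd V E w) * (card V - 1 - card (nbhd V E w))) =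
            2 * real (d w) * (real n - 1 - real (d w))"
          using n1 assms(3) unfolding d_def by (simp add: of_nat_diff)
      qed
      ultimately show ?thesis using double_count[OF assms(1)] by simp
    qed
    have P: "real n * (real n - 1) > 0" using n2 by simp
    have sumc: "(\<Sum>u\<in>V. \<Sum>v\<in>V. if u \<noteq> v then c else 0) = c * (real n * (real n - 1))" for c :: real
    proof -
      have "(\<Sum>u\<in>V. \<Sum>v\<in>V. if u \<noteq> v then c else 0) = (\<Sum>u\<in>V. c * (real n - 1))"
        using sum_ne_const[OF s(1)] assms(3) by (intro sum.cong) auto
      then show ?thesis using assms(3) by simp
    qed
    have lower: "real m * (real n * (real n - 1)) \<le> L"
      unfolding sumc[symmetric] L_def using mle by (intro sum_mono) auto
    have termle: "2 * real (d w) * (real n - 1 - real (d w)) \<le> (real n - 1)^2 / 2" for w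
    proof -
      have "0 \<le> (real n - 1 - 2 * real (d w))^2" by simp
      then show ?thesis by (simp add: power2_eq_square algebra_simps)
    qed
    have upper: "R \<le> real n * (real n - 1)^2 / 2"
    proof -
      have "R \<le> (\<Sum>w\<in>V. (real n - 1)^2 / 2)" unfolding R_def using termle by (intro sum_mono) auto
      then show ?thesis using assms(3) by simp
    qed
    have bound: "real m \<le> (real n - 1) / 2"
    proof -
      have "real m * (real n * (real n - 1)) \<le> ((real n - 1) / 2) * (real n * (real n - 1))"
        using lower upper DC by (simp add: power2_eq_square algebra_simps)
      then show ?thesis by (rule mult_right_le_imp_le[OF _ P])
    qed
    have iff: "real m = (real n - 1) / 2 \<longleftrightarrow> conference_graph V E"
    proof
      assume eq: "real m = (real n - 1) / 2"
      have mU: "real m * (real n * (real n - 1)) = real n * (real n - 1)^2 / 2"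
        unfolding eq by (simp add: power2_eq_square)
      have LR: "L = real n * (real n - 1)^2 / 2" "R = real n * (real n - 1)^2 / 2"
        using lower upper DC mU by linarith+
      have D0: "(\<Sum>u\<in>V. \<Sum>v\<in>V. if u \<noteq> v then real (Dv V E u v) - real m else 0) = 0"
      proof -
        have "(\<Sum>u\<in>V. \<Sum>v\<in>V. if u \<noteq> v then real (Dv V E u v) - real m else 0)
          = (\<Sum>u\<in>V. \<Sum>v\<in>V. (if u \<noteq> v then real (Dv V E u v) else 0) - (if u \<noteq> v then real m else 0))"
          by (intro sum.cong refl) auto
        also have "\<dots> = L - (\<Sum>u\<in>V. \<Sum>v\<in>V. if u \<noteq> v then real m else 0)"
          unfolding L_def by (simp only: sum_subtractf)
        also have "\<dots> = L - real m * (real n * (real n - 1))"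
          by (simp only: sumc)
        finally show ?thesis using LR mU by linarith
      qed
      have Deq: "real (Dv V E u v) = (real n - 1) / 2" if "u \<in> V" "v \<in> V" "u \<noteq> v" for u v
      proof -
        define f where "f u v = (if u \<noteq> v then real (Dv V E u v) - real m else 0)" for u v
        have f0: "0 \<le> f x y" if "x \<in> V" "y \<in> V" for x y
          unfolding f_def using mle[OF that] by auto
        have D0': "(\<Sum>x\<in>V. \<Sum>y\<in>V. f x y) = 0" using D0 unfolding f_def .
        have nn: "0 \<le> (\<Sum>y\<in>V. f x y)" if "x \<in> V" for x
          using f0 that by (intro sum_nonneg) auto
        have "\<forall>x\<in>V. (\<Sum>y\<in>V. f x y) = 0"
          using D0' sum_nonneg_eq_0_iff[OF s(1), of "\<lambda>x. \<Sum>y\<in>V. f x y"] nn by simp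
        then have "(\<Sum>y\<in>V. f u y) = 0" using that(1) by simp
        then have "\<forall>y\<in>V. f u y = 0"
          using sum_nonneg_eq_0_iff[OF s(1), of "\<lambda>y. f u y"] f0 that(1) by simp
        then have "f u v = 0" using that(2) by simp
        then show ?thesis using that(3) eq unfolding f_def by simp
      qed
      have deq: "real (d w) = (real n - 1) / 2" if w: "w \<in> V" for w
      proof -
        define g where "g w = (real n - 1)^2 / 2 - 2 * real (d w) * (real n - 1 - real (d w))" for w
        have "(\<Sum>w\<in>V. g w) = (\<Sum>w\<in>V. (real n - 1)^2 / 2) - R"
          unfolding R_def g_def by (simp only: sum_subtractf)
        then have g0: "(\<Sum>w\<in>V. g w) = 0" using LR(2) assms(3) by simp
        have "\<forall>w\<in>V. g w = 0"
          using g0 sum_nonneg_eq_0_iff[OF s(1), of g] termle unfolding g_def by simp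
        then have "g w = 0" using w by simp
        moreover have "(real n - 1 - 2 * real (d w))^2 = 2 * g w"
          unfolding g_def power2_eq_square by (simp add: field_simps)
        ultimately have "(real n - 1 - 2 * real (d w))^2 = 0" by simp
        then show ?thesis by simp
      qed
      show "conference_graph V E"
        unfolding conference_graph_def strongly_regular_def Let_def
      proof (intro conjI ballI impI)
        fix v assume "v \<in> V"
        then show "real (card (nbhd V E v)) = (real (card V) - 1) / 2"
          using deq assms(3) unfolding d_def by simp
      next
        fix u v assume uv: "u \<in> V" "v \<in> V" "u \<noteq> v \<and> E u v"
        have "real (Dv V E u v) + 2 * real (card (nbhd V E u \<inter> nbhd V E v)) + 2 = real (d u) + real (d v)"
          using ident_real[OF assms(1) uv(1,2)] uv(3) unfolding d_def by simp
        then show "real (card (nbhd V E u \<inter> nbhd V E v)) = (real (card V) - 5) / 4"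
          using Deq[OF uv(1,2)] deq[OF uv(1)] deq[OF uv(2)] uv(3) assms(3) by (simp; linarith)
      next
        fix u v assume uv: "u \<in> V" "v \<in> V" "u \<noteq> v \<and> \<not> E u v"
        have "real (Dv V E u v) + 2 * real (card (nbhd V E u \<inter> nbhd V E v)) = real (d u) + real (d v)"
          using ident_real[OF assms(1) uv(1,2)] uv(3) unfolding d_def by simp
        then show "real (card (nbhd V E u \<inter> nbhd V E v)) = (real (card V) - 1) / 4"
          using Deq[OF uv(1,2)] deq[OF uv(1)] deq[OF uv(2)] uv(3) assms(3) by (simp; linarith)
      qed simp
    next
      assume conf: "conference_graph V E"
      have sr: "strongly_regular V E (real n) ((real n - 1) / 2) ((real n - 5) / 4) ((real n - 1) / 4)"
        using conf assms(3) unfolding conference_graph_def Let_def by simp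
      have c1: "\<forall>v\<in>V. real (card (nbhd V E v)) = (real n - 1) / 2"
        using sr unfolding strongly_regular_def by blast
      have c2: "\<forall>u\<in>V. \<forall>v\<in>V. u \<noteq> v \<and> E u v \<longrightarrow> real (card (nbhd V E u \<inter> nbhd V E v)) = (real n - 5) / 4"
        using sr unfolding strongly_regular_def by blast
      have c3: "\<forall>u\<in>V. \<forall>v\<in>V. u \<noteq> v \<and> \<not> E u v \<longrightarrow> real (card (nbhd V E u \<inter> nbhd V E v)) = (real n - 1) / 4"
        using sr unfolding strongly_regular_def by blast
      obtain u v where uv: "u \<in> V" "v \<in> V" "u \<noteq> v" "m = Dv V E u v" using mS S_eq by auto
      have id: "real (Dv V E u v) + 2 * real (card (nbhd V E u \<inter> nbhd V E v)) + (if E u v then 2 else 0)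
          = real (card (nbhd V E u)) + real (card (nbhd V E v))"
        using ident_real[OF assms(1) uv(1,2,3)] .
      have du: "real (card (nbhd V E u)) = (real n - 1) / 2" using c1 uv(1) by blast
      have dv: "real (card (nbhd V E v)) = (real n - 1) / 2" using c1 uv(2) by blast
      show "real m = (real n - 1) / 2"
      proof (cases "E u v")
        case True
        have "real (card (nbhd V E u \<inter> nbhd V E v)) = (real n - 5) / 4" using c2 uv True by blast
        moreover have "real (Dv V E u v) + 2 * real (card (nbhd V E u \<inter> nbhd V E v)) + 2 = real n - 1"
          using id du dv True by simp
        moreover have "real m = real (Dv V E u v)" using uv(4) by simp
        ultimately show ?thesis by (simp add: field_simps)
      next
        case False
        have "real (card (nbhd V E u \<inter> nbhd V E v)) = (real n - 1) / 4" using c3 uv False by blast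
        moreover have "real (Dv V E u v) + 2 * real (card (nbhd V E u \<inter> nbhd V E v)) = real n - 1"
          using id du dv False by simp
        moreover have "real m = real (Dv V E u v)" using uv(4) by simp
        ultimately show ?thesis by (simp add: field_simps)
      qed
    qed
    show ?thesis using bound iff lbS m_def by simp
  qed
qed

end
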